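(* For all integers $m\geq 2$: (i) if $-\frac12<\lambda\leq 0$, then $$\widetilde A_{2,m}\geq\frac{(m-1)m(m+\lambda)(m+\lambda+1)\big(m^2+\lambda m-\frac12\big)\big(m^2+\lambda m-\frac{\lambda}{3}-\frac72\big)}{2(2\lambda+1)(2\lambda+5)};$$ (ii) if $\lambda\geq 0$, then $$\widetilde A_{2,m}\geq\frac{(m-1)m(m+\lambda)(m+\lambda+1)\big(m^2+\lambda m-\frac12\big)\big(m^2+\lambda m-\frac{\lambda}{2}-\frac72\big)}{2(2\lambda+1)(2\lambda+5)};$$ and for every $\lambda>-\frac12$, $$\widetilde A_{2,m}\leq\frac{(m-1)m^2(m+\lambda)^2(m+\lambda+1)\big(m^2+\lambda m-\frac12\big)}{2(2\lambda+1)(2\lambda+5)}.$$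
   Context: Fix $\lambda>-1/2$. Define $\widetilde Q_m$ by $\widetilde Q_0=1$, $\widetilde Q_1(\mu)=1-\frac{\lambda+1}{2}\mu$ and, for $m\geq2$, $$\widetilde Q_m-\widetilde Q_{m-1}=\frac{(m-1)(2m-1)(2m-1+\lambda)}{(m-1+\lambda)(2m-3+\lambda)(2m-3+2\lambda)}\big[\widetilde Q_{m-1}-\widetilde Q_{m-2}\big]-\frac{(2m-1)(2m-2+\lambda)(2m-1+\lambda)}{2(m-1+\lambda)}\,\mu\,\widetilde Q_{m-1}(\mu).$$ Write $\widetilde Q_m(\mu)=\sum_{i=0}^m(-1)^i\widetilde A_{i,m}\mu^i$; thus $\widetilde A_{2,m}$ is the coefficient of $\mu^2$ in $\widetilde Q_m$. *)

theory Defs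
  imports "HOL-Computational_Algebra.Polynomial"
begin

fun Qt :: "real \<Rightarrow> nat \<Rightarrow> real poly" where
  "Qt lam 0 = 1"
| "Qt lam (Suc 0) = [:1, - (lam + 1) / 2:]"
| "Qt lam (Suc (Suc n)) =
     (let m = real n + 2;
          c1 = (m - 1) * (2*m - 1) * (2*m - 1 + lam)
               / ((m - 1 + lam) * (2*m - 3 + lam) * (2*m - 3 + 2*lam));
          c2 = (2*m - 1) * (2*m - 2 + lam) * (2*m - 1 + lam) / (2 * (m - 1 + lam))
      in Qt lam (Suc n) + smult c1 (Qt lam (Suc n) - Qt lam n)
         - smult c2 (pCons 0 (Qt lam (Suc n))))"

text \<open>Q_m(mu) = sum_i (-1)^i A_{i,m} mu^i, so A_{i,m} = (-1)^i * coeff.\<close>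
definition At :: "real \<Rightarrow> nat \<Rightarrow> nat \<Rightarrow> real" where
  "At lam i m = (-1) ^ i * coeff (Qt lam m) i"

end

theory Submission imports Defs begin

definition A1p :: "real \<Rightarrow> real \<Rightarrow> real" where
  "A1p l n = (n*(n+l)) * (n*(n+l) - 1/2)"

definition A2p :: "real \<Rightarrow> real \<Rightarrow> real" where
  "A2p l n = (n*(n+l)) * (12*(2*l+3)*(n*(n+l))^3 - 4*(8*l^2+34*l+41)*(n*(n+l))^2
     + (64*l^2+218*l+199)*(n*(n+l)) + (8*l^4+28*l^3+6*l^2-85*l-71))"

lemma poly1:
  fixes m l :: real
  shows "(- A1p l m) * ((m - 1 + l) * (2*m - 3 + l) * (2*m - 3 + 2*l)) * (2 * (m - 1 + l))
    = (- A1p l (m-1)) * ((m - 1 + l) * (2*m - 3 + l) * (2*m - 3 + 2*l)) * (2 * (m - 1 + l))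
      + ((m - 1) * (2*m - 1) * (2*m - 1 + l)) * (2 * (m - 1 + l)) * (- A1p l (m-1) + A1p l (m-2))
      - ((2*m - 1) * (2*m - 2 + l) * (2*m - 1 + l)) * ((m - 1 + l) * (2*m - 3 + l) * (2*m - 3 + 2*l)) * (2*l+1)"
  unfolding A1p_def by algebra

lemma poly2:
  fixes m l :: real
  shows "(A2p l m) * ((m - 1 + l) * (2*m - 3 + l) * (2*m - 3 + 2*l)) * (2 * (m - 1 + l))
    = (A2p l (m-1)) * ((m - 1 + l) * (2*m - 3 + l) * (2*m - 3 + 2*l)) * (2 * (m - 1 + l))
      + ((m - 1) * (2*m - 1) * (2*m - 1 + l)) * (2 * (m - 1 + l)) * (A2p l (m-1) - A2p l (m-2))
      - ((2*m - 1) * (2*m - 2 + l) * (2*m - 1 + l)) * ((m - 1 + l) * (2*m - 3 + l) * (2*m - 3 + 2*l)) * (- A1p l (m-1) * (24*(2*l+3)*(2*l+5)))"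
  unfolding A2p_def A1p_def by algebra

lemma gen:
  fixes X Y Z W D1 D2 E p1 p2 :: real
  assumes "D1 \<noteq> 0" "D2 \<noteq> 0" "E \<noteq> 0" "X*D1*D2 = Y*D1*D2 + p1*D2*Z - p2*D1*W"
  shows "X/E = Y/E + p1/D1*(Z/E) - p2/D2*(W/E)"
proof -
  have e: "X = Y + p1*Z/D1 - p2*W/D2" using assms by (simp add: field_simps)
  show ?thesis by (simp add: e add_divide_distrib diff_divide_distrib)
qed

lemma closed:
  assumes "lam > -1/2"
  shows "coeff (Qt lam n) 0 = 1 \<and> coeff (Qt lam n) 1 = - A1p lam (real n) / (2*lam+1)
    \<and> coeff (Qt lam n) 2 = A2p lam (real n) / (24*(2*lam+1)*(2*lam+3)*(2*lam+5))"
  using assms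
proof (induction lam n rule: Qt.induct)
  case (1 lam)
  then show ?case by (simp add: A1p_def A2p_def)
next
  case (2 lam)
  have "2*lam+1 \<noteq> 0" using 2 by simp
  then show ?case by (simp add: A1p_def A2p_def numeral_2_eq_2 field_simps) algebra
next
  case (3 lam n)
  define m where "m = real n + 2"
  define c1 where "c1 = (m - 1) * (2*m - 1) * (2*m - 1 + lam)
               / ((m - 1 + lam) * (2*m - 3 + lam) * (2*m - 3 + 2*lam))"
  define c2 where "c2 = (2*m - 1) * (2*m - 2 + lam) * (2*m - 1 + lam) / (2 * (m - 1 + lam))"
  have Q: "Qt lam (Suc (Suc n)) = Qt lam (Suc n) + smult c1 (Qt lam (Suc n) - Qt lam n)
         - smult c2 (pCons 0 (Qt lam (Suc n)))"
    by (simp add: m_def c1_def c2_def Let_def)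
  have IH1: "coeff (Qt lam (Suc n)) 0 = 1" "coeff (Qt lam (Suc n)) 1 = - A1p lam (m-1) / (2*lam+1)"
    "coeff (Qt lam (Suc n)) 2 = A2p lam (m-1) / (24*(2*lam+1)*(2*lam+3)*(2*lam+5))"
    using "3.IH"(2)[OF refl refl refl "3.prems"] by (auto simp: m_def)
  have IH0: "coeff (Qt lam n) 0 = 1" "coeff (Qt lam n) 1 = - A1p lam (m-2) / (2*lam+1)"
    "coeff (Qt lam n) 2 = A2p lam (m-2) / (24*(2*lam+1)*(2*lam+3)*(2*lam+5))"
    using "3.IH"(3)[OF refl refl refl "3.prems"] by (auto simp: m_def)
  have rm: "real (Suc (Suc n)) = m" by (simp add: m_def)
  have pos: "m - 1 + lam > 0" "2*m-3+lam > 0" "2*m-3+2*lam > 0" "2*lam+1 > 0" "2*lam+3 > 0" "2*lam+5>0"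
    using "3.prems" by (auto simp: m_def)
  have c0: "coeff (Qt lam (Suc (Suc n))) 0 = 1"
    unfolding Q using IH1 IH0 by simp
  have "coeff (Qt lam (Suc (Suc n))) 1 = coeff (Qt lam (Suc n)) 1
       + c1 * (coeff (Qt lam (Suc n)) 1 - coeff (Qt lam n) 1) - c2 * coeff (Qt lam (Suc n)) 0"
    unfolding Q by (simp add: coeff_pCons)
  also have "\<dots> = (- A1p lam (m-1)) / (2*lam+1) + ((m - 1) * (2*m - 1) * (2*m - 1 + lam))
      / ((m - 1 + lam) * (2*m - 3 + lam) * (2*m - 3 + 2*lam)) * ((- A1p lam (m-1) + A1p lam (m-2)) / (2*lam+1))
      - ((2*m - 1) * (2*m - 2 + lam) * (2*m - 1 + lam)) / (2 * (m - 1 + lam)) * ((2*lam+1)/(2*lam+1))"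
    using IH1 IH0 pos unfolding c1_def c2_def by (simp add: diff_divide_distrib)
  also have "\<dots> = (- A1p lam m) / (2*lam+1)"
    by (rule gen[symmetric]) (use pos poly1[of lam m] in auto)
  finally have c1': "coeff (Qt lam (Suc (Suc n))) 1 = - A1p lam (real (Suc (Suc n))) / (2*lam+1)"
    using rm by simp
  have "coeff (Qt lam (Suc (Suc n))) 2 = coeff (Qt lam (Suc n)) 2
       + c1 * (coeff (Qt lam (Suc n)) 2 - coeff (Qt lam n) 2) - c2 * coeff (Qt lam (Suc n)) 1"
    unfolding Q by (simp add: coeff_pCons numeral_2_eq_2)
  also have "\<dots> = (A2p lam (m-1)) / (24*(2*lam+1)*(2*lam+3)*(2*lam+5)) + ((m - 1) * (2*m - 1) * (2*m - 1 + lam))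
      / ((m - 1 + lam) * (2*m - 3 + lam) * (2*m - 3 + 2*lam)) * ((A2p lam (m-1) - A2p lam (m-2)) / (24*(2*lam+1)*(2*lam+3)*(2*lam+5)))
      - ((2*m - 1) * (2*m - 2 + lam) * (2*m - 1 + lam)) / (2 * (m - 1 + lam))
        * ((- A1p lam (m-1) * (24*(2*lam+3)*(2*lam+5))) / (24*(2*lam+1)*(2*lam+3)*(2*lam+5)))"
  proof -
    have hW: "(- A1p lam (m-1) * (24*(2*lam+3)*(2*lam+5))) / (24*(2*lam+1)*(2*lam+3)*(2*lam+5))
        = - A1p lam (m-1)/(2*lam+1)"
    proof -
      have K: "24*(2*lam+3)*(2*lam+5) \<noteq> (0::real)" using pos by simp
      have "24*(2*lam+1)*(2*lam+3)*(2*lam+5) = (2*lam+1)*(24*(2*lam+3)*(2*lam+5))" by (simp add: algebra_simps)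
      then show ?thesis by (simp only:) (rule nonzero_mult_divide_mult_cancel_right[OF K])
    qed
    show ?thesis unfolding hW using IH1 IH0 pos unfolding c1_def c2_def by (simp add: diff_divide_distrib)
  qed
  also have "\<dots> = A2p lam m / (24*(2*lam+1)*(2*lam+3)*(2*lam+5))"
    by (rule gen[symmetric]) (use pos poly2[of lam m] in auto)
  finally have c2': "coeff (Qt lam (Suc (Suc n))) 2 = A2p lam (real (Suc (Suc n))) / (24*(2*lam+1)*(2*lam+3)*(2*lam+5))"
    using rm by simp
  show ?case using c0 c1' c2' by simp
qed

lemma idU: fixes m lam :: real
  shows "12*(2*lam+3)*((m - 1) * m^2 * (m + lam)^2 * (m + lam + 1) * (m^2 + lam * m - 1/2)) - A2p lam m
   = 1350 + 3690*(lam+1/2)^1 + 3840*(lam+1/2)^2 + 1932*(lam+1/2)^3 + 480*(lam+1/2)^4 + 48*(lam+1/2)^5 + 5565*(m-2)^1 + 12965*(m-2)^1*(lam+1/2)^1 + 11510*(m-2)^1*(lam+1/2)^2 + 4950*(m-2)^1*(lam+1/2)^3 + 1048*(m-2)^1*(lam+1/2)^4 + 88*(m-2)^1*(lam+1/2)^5 + 9185*(m-2)^2 + 17978*(m-2)^2*(lam+1/2)^1 + 13277*(m-2)^2*(lam+1/2)^2 + 4668*(m-2)^2*(lam+1/2)^3 + 780*(m-2)^2*(lam+1/2)^4 + 48*(m-2)^2*(lam+1/2)^5 + 7770*(m-2)^3 + 12517*(m-2)^3*(lam+1/2)^1 + 7429*(m-2)^3*(lam+1/2)^2 + 2010*(m-2)^3*(lam+1/2)^3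 + 236*(m-2)^3*(lam+1/2)^4 + 8*(m-2)^3*(lam+1/2)^5 + 3560*(m-2)^4 + 4586*(m-2)^4*(lam+1/2)^1 + 2066*(m-2)^4*(lam+1/2)^2 + 384*(m-2)^4*(lam+1/2)^3 + 24*(m-2)^4*(lam+1/2)^4 + 840*(m-2)^5 + 828*(m-2)^5*(lam+1/2)^1 + 252*(m-2)^5*(lam+1/2)^2 + 24*(m-2)^5*(lam+1/2)^3 + 80*(m-2)^6 + 56*(m-2)^6*(lam+1/2)^1 + 8*(m-2)^6*(lam+1/2)^2"
  unfolding A2p_def by algebra

lemma idL0: fixes m lam :: real
  shows "A2p lam m - 12*(2*lam+3)*((m - 1) * m * (m + lam) * (m + lam + 1) * (m^2 + lam * m - 1/2) * (m^2 + lam * m - lam/3 - 7/2))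
   = 150 + 760*(lam+1/2)^1 + 1070*(lam+1/2)^2 + 516*(lam+1/2)^3 + 385*(m-2)^1 + 2700*(m-2)^1*(lam+1/2)^1 + 3477*(m-2)^1*(lam+1/2)^2 + 1398*(m-2)^1*(lam+1/2)^3 + 355*(m-2)^2 + 4016*(m-2)^2*(lam+1/2)^1 + 4407*(m-2)^2*(lam+1/2)^2 + 1370*(m-2)^2*(lam+1/2)^3 + 140*(m-2)^3 + 3204*(m-2)^3*(lam+1/2)^1 + 2724*(m-2)^3*(lam+1/2)^2 + 576*(m-2)^3*(lam+1/2)^3 + 16*(m-2)^3*(lam+1/2)^4 + 20*(m-2)^4 + 1432*(m-2)^4*(lam+1/2)^1 + 820*(m-2)^4*(lam+1/2)^2 + 88*(m-2)^4*(lam+1/2)^3 + 336*(m-2)^5*(lam+1/2)^1 + 96*(m-2)^5*(lam+1/2)^2 + 32*(m-2)^6*(lam+1/2)^1 + (lam+1/2)^4*(40-16*(lam+1/2)) + (m-2)*(lam+1/2)^4*(92-24*(lam+1/2)) + (m-2)^2*(lam+1/2)^4*(68-8*(lam+1/2))"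
  unfolding A2p_def by algebra

lemma idL1: fixes m lam :: real
  shows "A2p lam m - 12*(2*lam+3)*((m - 1) * m * (m + lam) * (m + lam + 1) * (m^2 + lam * m - 1/2) * (m^2 + lam * m - lam/2 - 7/2))
   = 864 + 2484*lam^1 + 2406*lam^2 + 954*lam^3 + 132*lam^4 + 2784*(m-2)^1 + 8140*(m-2)^1*lam^1 + 7313*(m-2)^1*lam^2 + 2619*(m-2)^1*lam^3 + 346*(m-2)^1*lam^4 + 8*(m-2)^1*lam^5 + 3640*(m-2)^2 + 10709*(m-2)^2*lam^1 + 8563*(m-2)^2*lam^2 + 2631*(m-2)^2*lam^3 + 312*(m-2)^2*lam^4 + 12*(m-2)^2*lam^5 + 2496*(m-2)^3 + 7256*(m-2)^3*lam^1 + 4858*(m-2)^3*lam^2 + 1176*(m-2)^3*lam^3 + 110*(m-2)^3*lam^4 + 4*(m-2)^3*lam^5 + 952*(m-2)^4 + 2669*(m-2)^4*lam^1 + 1360*(m-2)^4*lam^2 + 222*(m-2)^4*lam^3 + 12*(m-2)^4*lam^4 + 192*(m-2)^5 + 504*(m-2)^5*lam^1 + 162*(m-2)^5*lam^2 + 12*(m-2)^5*lam^3 + 16*(m-2)^6 + 38*(m-2)^6*lam^1 + 4*(m-2)^6*lam^2"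
  unfolding A2p_def by algebra

lemma nnU: fixes k t :: real assumes "k \<ge> 0" "t \<ge> 0" shows "0 \<le> 1350 + 3690*t^1 + 3840*t^2 + 1932*t^3 + 480*t^4 + 48*t^5 + 5565*k^1 + 12965*k^1*t^1 + 11510*k^1*t^2 + 4950*k^1*t^3 + 1048*k^1*t^4 + 88*k^1*t^5 + 9185*k^2 + 17978*k^2*t^1 + 13277*k^2*t^2 + 4668*k^2*t^3 + 780*k^2*t^4 + 48*k^2*t^5 + 7770*k^3 + 12517*k^3*t^1 + 7429*k^3*t^2 + 2010*k^3*t^3 + 236*k^3*t^4 + 8*k^3*t^5 + 3560*k^4 + 4586*k^4*t^1 + 2066*k^4*t^2 + 384*k^4*t^3 + 24*k^4*t^4 + 840*k^5 + 828*k^5*t^1 + 252*k^5*t^2 + 24*k^5*t^3 + 80*k^6 + 56*k^6*t^1 + 8*k^6*t^2"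
  by (intro add_nonneg_nonneg mult_nonneg_nonneg zero_le_power) (use assms in auto)
lemma nnL0: fixes k t :: real assumes "k \<ge> 0" "t \<ge> 0" "t \<le> 1/2" shows "0 \<le> 150 + 760*t^1 + 1070*t^2 + 516*t^3 + 385*k^1 + 2700*k^1*t^1 + 3477*k^1*t^2 + 1398*k^1*t^3 + 355*k^2 + 4016*k^2*t^1 + 4407*k^2*t^2 + 1370*k^2*t^3 + 140*k^3 + 3204*k^3*t^1 + 2724*k^3*t^2 + 576*k^3*t^3 + 16*k^3*t^4 + 20*k^4 + 1432*k^4*t^1 + 820*k^4*t^2 + 88*k^4*t^3 + 336*k^5*t^1 + 96*k^5*t^2 + 32*k^6*t^1 + t^4*(40-16*t) + k*t^4*(92-24*t) + k^2*t^4*(68-8*t)"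
  by (intro add_nonneg_nonneg mult_nonneg_nonneg zero_le_power) (use assms in auto)
lemma nnL1: fixes k t :: real assumes "k \<ge> 0" "t \<ge> 0" shows "0 \<le> 864 + 2484*t^1 + 2406*t^2 + 954*t^3 + 132*t^4 + 2784*k^1 + 8140*k^1*t^1 + 7313*k^1*t^2 + 2619*k^1*t^3 + 346*k^1*t^4 + 8*k^1*t^5 + 3640*k^2 + 10709*k^2*t^1 + 8563*k^2*t^2 + 2631*k^2*t^3 + 312*k^2*t^4 + 12*k^2*t^5 + 2496*k^3 + 7256*k^3*t^1 + 4858*k^3*t^2 + 1176*k^3*t^3 + 110*k^3*t^4 + 4*k^3*t^5 + 952*k^4 + 2669*k^4*t^1 + 1360*k^4*t^2 + 222*k^4*t^3 + 12*k^4*t^4 + 192*k^5 + 504*k^5*t^1 + 162*k^5*t^2 + 12*k^5*t^3 + 16*k^6 + 38*k^6*t^1 + 4*k^6*t^2"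
  by (intro add_nonneg_nonneg mult_nonneg_nonneg zero_le_power) (use assms in auto)

lemma scale: fixes X lam :: real assumes "lam > -1/2"
  shows "X / (2 * (2*lam + 1) * (2*lam + 5)) = 12*(2*lam+3)*X / (24*(2*lam+1)*(2*lam+3)*(2*lam+5))"
proof -
  have K: "12*(2*lam+3) \<noteq> (0::real)" using assms by simp
  have e1: "24*(2*lam+1)*(2*lam+3)*(2*lam+5) = (2 * (2*lam + 1) * (2*lam + 5)) * (12*(2*lam+3))"
    by (simp add: algebra_simps)
  have e2: "12*(2*lam+3)*X = X * (12*(2*lam+3))" by simp
  show ?thesis unfolding e1 e2 by (rule nonzero_mult_divide_mult_cancel_right[OF K, symmetric])
qed

theorem lemma3p6:
  fixes lam :: real and m :: nat
  assumes "lam > - 1/2" and "m \<ge> 2"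
  shows "(lam \<le> 0 \<longrightarrow>
            At lam 2 m \<ge> (real m - 1) * real m * (real m + lam) * (real m + lam + 1)
              * ((real m)^2 + lam * real m - 1/2) * ((real m)^2 + lam * real m - lam/3 - 7/2)
              / (2 * (2*lam + 1) * (2*lam + 5)))
       \<and> (lam \<ge> 0 \<longrightarrow>
            At lam 2 m \<ge> (real m - 1) * real m * (real m + lam) * (real m + lam + 1)
              * ((real m)^2 + lam * real m - 1/2) * ((real m)^2 + lam * real m - lam/2 - 7/2)
              / (2 * (2*lam + 1) * (2*lam + 5)))
       \<and> At lam 2 m \<le> (real m - 1) * (real m)^2 * (real m + lam)^2 * (real m + lam + 1)
              * ((real m)^2 + lam * real m - 1/2)
              / (2 * (2*lam + 1) * (2*lam + 5))"
proof -
  define C where "C = 24*(2*lam+1)*(2*lam+3)*(2*lam+5)"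
  have Cpos: "C > 0" using assms(1) unfolding C_def by (intro mult_pos_pos) auto
  have At: "At lam 2 m = A2p lam (real m) / C"
    using closed[OF assms(1), of m] unfolding At_def C_def by simp
  have hk: "real m - 2 \<ge> 0" using assms(2) by simp
  have ht: "lam + 1/2 \<ge> 0" using assms(1) by simp
  have up: "A2p lam (real m) \<le> 12*(2*lam+3)*((real m - 1) * (real m)^2 * (real m + lam)^2 * (real m + lam + 1) * ((real m)^2 + lam * real m - 1/2))"
    using idU[of lam "real m"] nnU[OF hk ht] by simp
  have lo0: "lam \<le> 0 \<Longrightarrow> 12*(2*lam+3)*((real m - 1) * real m * (real m + lam) * (real m + lam + 1) * ((real m)^2 + lam * real m - 1/2) * ((real m)^2 + lam * real m - lam/3 - 7/2)) \<le> A2p lam (real m)"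
  proof -
    assume "lam \<le> 0"
    then have "lam + 1/2 \<le> 1/2" by simp
    then show ?thesis using idL0[of lam "real m"] nnL0[OF hk ht] by simp
  qed
  have lo1: "lam \<ge> 0 \<Longrightarrow> 12*(2*lam+3)*((real m - 1) * real m * (real m + lam) * (real m + lam + 1) * ((real m)^2 + lam * real m - 1/2) * ((real m)^2 + lam * real m - lam/2 - 7/2)) \<le> A2p lam (real m)"
  proof -
    assume h: "lam \<ge> 0"
    show ?thesis using idL1[of lam "real m"] nnL1[OF hk h] by simp
  qed
  show ?thesis
    unfolding At scale[OF assms(1)] C_def[symmetric]
    using up lo0 lo1 Cpos by (auto intro: divide_right_mono)
qed

end
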